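(* Let $F=\frac19\begin{pmatrix}1&1&1\\1&1&1\\1&1&1\end{pmatrix}$ (box blur filter). Then the equation $F*X=B$ with the reflexive boundary condition, for unknown $X\in\mathbb{R}^{m\times n}$, has a unique solution for every $B\in\mathbb{R}^{m\times n}$ if and only if $m,n\notin\{3l: l\in\mathbb{N}\}$.
   Context: $\mathbb{N}=\{1,2,3,\dots\}$. For $F=[f_{ij}]\in\mathbb{R}^{3\times3}$ and $X=[x_{ij}]\in\mathbb{R}^{m\times n}$, the convolution $F*X\in\mathbb{R}^{m\times n}$ is defined by $[F*X]_{ij}=\sum_{l_1=1}^3\sum_{l_2=1}^3 f_{l_1l_2}\,x_{i-l_1+2,\,j-l_2+2}$ for $1\le i\le m$, $1\le j\le n$, where the reflexive boundary condition sets $x_{0j}=x_{1j}$, $x_{m+1,j}=x_{mj}$, $x_{i0}=x_{i1}$, $x_{i,n+1}=x_{in}$ (for all indices $i\in\{0,\dots,m+1\}$, $j\in\{0,\dots,n+1\}$, so corners are also determined, e.g. $x_{00}=x_{11}$). *)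

theory Defs
  imports "HOL-Analysis.Analysis"
begin

text \<open>An m x n real matrix is represented as a function nat => nat => real with
  1-based indices, vanishing outside {1..m} x {1..n}.\<close>
definition matrices :: "nat \<Rightarrow> nat \<Rightarrow> (nat \<Rightarrow> nat \<Rightarrow> real) set" where
  "matrices m n = {X. \<forall>i j. (i \<notin> {1..m} \<or> j \<notin> {1..n}) \<longrightarrow> X i j = 0}"

text \<open>Reflexive boundary condition: index 0 maps to 1, index m+1 maps to m.
  Indices are taken as integers (i - l1 + 2 may be 0).\<close>
definition refl_idx :: "nat \<Rightarrow> int \<Rightarrow> nat" where
  "refl_idx m i = (if i < 1 then 1 else if i > int m then m else nat i)"

definition refl_ext :: "nat \<Rightarrow> nat \<Rightarrow> (nat \<Rightarrow> nat \<Rightarrow> real) \<Rightarrow> int \<Rightarrow> int \<Rightarrow> real" where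
  "refl_ext m n X i j = X (refl_idx m i) (refl_idx n j)"

definition conv_refl :: "(nat \<Rightarrow> nat \<Rightarrow> real) \<Rightarrow> nat \<Rightarrow> nat \<Rightarrow> (nat \<Rightarrow> nat \<Rightarrow> real) \<Rightarrow> (nat \<Rightarrow> nat \<Rightarrow> real)" where
  "conv_refl F m n X = (\<lambda>i j. if i \<in> {1..m} \<and> j \<in> {1..n} then
      (\<Sum>l1\<in>{1..3::nat}. \<Sum>l2\<in>{1..3::nat}.
         F l1 l2 * refl_ext m n X (int i - int l1 + 2) (int j - int l2 + 2))
    else 0)"

definition box_blur :: "nat \<Rightarrow> nat \<Rightarrow> real" where
  "box_blur l1 l2 = (if l1 \<in> {1..3} \<and> l2 \<in> {1..3} then 1/9 else 0)"

end

theory Submission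
  imports Defs
begin

definition op1 :: "nat \<Rightarrow> (nat \<Rightarrow> real) \<Rightarrow> nat \<Rightarrow> real" where
  "op1 m x i = (\<Sum>l\<in>{1..3::nat}. x (refl_idx m (int i - int l + 2)))"

lemma three_set: "{1..3::nat} = {1,2,3}" by auto

lemma op1_eq:
  assumes "1 \<le> i" "i \<le> m"
  shows "op1 m x i = x (if i = m then m else i+1) + x i + x (if i = 1 then 1 else i - 1)"
proof -
  have a: "refl_idx m (int i - int 1 + 2) = (if i = m then m else i+1)"
    using assms by (auto simp: refl_idx_def)
  have b: "refl_idx m (int i - int 2 + 2) = i"
    using assms by (auto simp: refl_idx_def)
  have c: "refl_idx m (int i - int 3 + 2) = (if i = 1 then 1 else i - 1)"
    using assms by (auto simp: refl_idx_def nat_diff_distrib)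
  show ?thesis unfolding op1_def three_set
    using a b c by (simp add: algebra_simps)
qed

lemma op1_cong:
  assumes "\<forall>k\<in>{1..m}. x k = y k" "i \<in> {1..m}"
  shows "op1 m x i = op1 m y i"
proof -
  have "i - 1 \<in> {1..m}" if "i \<noteq> 1" using assms that by auto
  moreover have "i + 1 \<in> {1..m}" if "i \<noteq> m" using assms that by auto
  ultimately show ?thesis using assms by (auto simp: op1_eq)
qed

fun s :: "(nat \<Rightarrow> real) \<Rightarrow> real \<Rightarrow> nat \<Rightarrow> real" where
  "s b t 0 = 0"
| "s b t (Suc 0) = t"
| "s b t (Suc (Suc 0)) = b 1 - 2 * t"
| "s b t (Suc (Suc (Suc k))) = b (k+2) - s b t (Suc k) - s b t (Suc (Suc k))"

definition cc :: "nat \<Rightarrow> real" where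
  "cc k = (if k mod 3 = 2 then -2 else 1)"

lemma cc_rec: "cc (Suc (Suc (Suc k))) = - cc (Suc k) - cc (Suc (Suc k))"
proof -
  have "k mod 3 = 0 \<or> k mod 3 = 1 \<or> k mod 3 = 2" by arith
  then show ?thesis by (auto simp: cc_def mod_Suc)
qed

lemma s_affine: "k \<ge> 1 \<Longrightarrow> s b t k = s b 0 k + cc k * t"
proof (induction b t k rule: s.induct)
  case (4 b t k)
  show ?case
  proof (cases k)
    case 0
    then show ?thesis using 4 by (simp add: cc_def algebra_simps)
  next
    case (Suc k')
    have h1: "s b t (Suc k) = s b 0 (Suc k) + cc (Suc k) * t" using 4 by simp
    have h2: "s b t (Suc (Suc k)) = s b 0 (Suc (Suc k)) + cc (Suc (Suc k)) * t" using 4 by simp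
    have e1: "s b t (Suc (Suc (Suc k))) = b (k+2) - s b t (Suc k) - s b t (Suc (Suc k))" by simp
    have e2: "s b 0 (Suc (Suc (Suc k))) = b (k+2) - s b 0 (Suc k) - s b 0 (Suc (Suc k))" by simp
    have e3: "cc (Suc (Suc (Suc k))) * t = - cc (Suc k) * t - cc (Suc (Suc k)) * t"
      by (simp add: cc_rec algebra_simps)
    show ?thesis using h1 h2 e1 e2 e3 by linarith
  qed
qed (auto simp: cc_def)

lemma sol_form:
  assumes "\<forall>i. 1 \<le> i \<and> i < m \<longrightarrow> op1 m x i = b i"
  shows "k \<ge> 1 \<Longrightarrow> k \<le> m \<Longrightarrow> x k = s b (x 1) k"
proof (induction k rule: less_induct)
  case (less k)
  have "k = 1 \<or> k = 2 \<or> k = Suc (Suc (Suc (k - 3)))" using less.prems by arith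
  then consider "k = 1" | "k = 2" | k' where "k = Suc (Suc (Suc k'))" by blast
  then show ?case
  proof cases
    case 1 then show ?thesis by simp
  next
    case 2
    have "op1 m x 1 = b 1" using assms less.prems 2 by auto
    then show ?thesis using less.prems 2 by (simp add: op1_eq numeral_2_eq_2)
  next
    case 3
    have "op1 m x (k'+2) = b (k'+2)" using assms less.prems 3 by auto
    moreover have "x (Suc k') = s b (x 1) (Suc k')" using less.IH[of "Suc k'"] less.prems 3 by simp
    moreover have "x (Suc (Suc k')) = s b (x 1) (Suc (Suc k'))"
      using less.IH[of "Suc (Suc k')"] less.prems 3 by simp
    ultimately show ?thesis using less.prems 3 by (simp add: op1_eq algebra_simps)
  qed
qed

lemma cc_sum3: "cc q + cc (Suc q) + cc (Suc (Suc q)) = 0"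
proof -
  have "q mod 3 = 0 \<or> q mod 3 = 1 \<or> q mod 3 = 2" by arith
  then show ?thesis by (auto simp: cc_def mod_Suc)
qed

lemma cc_d:
  "p mod 3 = 0 \<Longrightarrow> 2 * cc (Suc p) + cc p = 3"
  "p mod 3 = 1 \<Longrightarrow> 2 * cc (Suc p) + cc p = -3"
  "p mod 3 = 2 \<Longrightarrow> 2 * cc (Suc p) + cc p = 0"
  by (auto simp: cc_def mod_Suc)

lemma op1_last: "m \<ge> 2 \<Longrightarrow> op1 m x m = 2 * x m + x (m - 1)"
  by (simp add: op1_eq)

lemma op1_one: "op1 1 x 1 = 3 * x 1"
  by (simp add: op1_eq)

lemma sol_aff:
  assumes "\<forall>i\<in>{1..m}. op1 m x i = b i" "k \<in> {1..m}"
  shows "x k = s b 0 k + cc k * x 1"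
proof -
  have "x k = s b (x 1) k" using sol_form[of m x b k] assms by auto
  then show ?thesis using s_affine[of k b "x 1"] assms by simp
qed

lemma d_nz: "m \<ge> 2 \<Longrightarrow> m mod 3 \<noteq> 0 \<Longrightarrow> 2 * cc m + cc (m - 1) \<noteq> 0"
proof -
  assume a: "m \<ge> 2" "m mod 3 \<noteq> 0"
  obtain p where p: "m = Suc p" using a by (cases m) auto
  have "p mod 3 \<noteq> 2" using a p by (auto simp: mod_Suc split: if_splits)
  then have "p mod 3 = 0 \<or> p mod 3 = 1" by arith
  then show ?thesis using cc_d[of p] p by auto
qed

lemma uniq1:
  assumes "m \<ge> 1" "m mod 3 \<noteq> 0" "\<forall>i\<in>{1..m}. op1 m x i = b i"
    "\<forall>i\<in>{1..m}. op1 m y i = b i" "i \<in> {1..m}"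
  shows "x i = y i"
proof (cases "m = 1")
  case True
  then show ?thesis using assms op1_one[of x] op1_one[of y] by auto
next
  case False
  then have m2: "m \<ge> 2" using assms by auto
  define d where "d = 2 * cc m + cc (m - 1)"
  have dnz: "d \<noteq> 0" using d_nz[OF m2 assms(2)] d_def by simp
  have key: "d * z 1 = b m - 2 * s b 0 m - s b 0 (m - 1)"
    if z: "\<forall>i\<in>{1..m}. op1 m z i = b i" for z
  proof -
    have "op1 m z m = b m" using z m2 by auto
    then have "2 * z m + z (m - 1) = b m" using op1_last[OF m2] by simp
    moreover have "z m = s b 0 m + cc m * z 1" using sol_aff[OF z, of m] m2 by simp
    moreover have "z (m - 1) = s b 0 (m - 1) + cc (m - 1) * z 1"
      using sol_aff[OF z, of "m - 1"] m2 by simp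
    ultimately show ?thesis unfolding d_def by (simp add: algebra_simps)
  qed
  have "d * x 1 = d * y 1" using key[OF assms(3)] key[OF assms(4)] by simp
  then have "x 1 = y 1" using dnz by simp
  then show ?thesis using sol_aff[OF assms(3) assms(5)] sol_aff[OF assms(4) assms(5)] by simp
qed

lemma exist1:
  assumes "m \<ge> 1" "m mod 3 \<noteq> 0"
  shows "\<exists>x. \<forall>i\<in>{1..m}. op1 m x i = b i"
proof (cases "m = 1")
  case True
  have "op1 m (\<lambda>_. b 1 / 3) 1 = b 1" using True op1_one[of "\<lambda>_. b 1 / 3"] by simp
  then show ?thesis using True by (intro exI[of _ "\<lambda>_. b 1 / 3"]) auto
next
  case False
  then have m2: "m \<ge> 2" using assms by auto
  define d where "d = 2 * cc m + cc (m - 1)"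
  have dnz: "d \<noteq> 0" using d_nz[OF m2 assms(2)] d_def by simp
  define t where "t = (b m - 2 * s b 0 m - s b 0 (m - 1)) / d"
  have "op1 m (s b t) i = b i" if i: "i \<in> {1..m}" for i
  proof -
    have "i = m \<or> (i = 1 \<and> i < m) \<or> (i = (i - 2) + 2 \<and> i < m)" using i by auto
    then consider "i = m" | "i = 1" "i < m" | k where "i = k + 2" "i < m" by blast
    then show ?thesis
    proof cases
      case 1
      have "op1 m (s b t) m = 2 * s b t m + s b t (m - 1)" using op1_last[OF m2] by simp
      also have "\<dots> = 2 * s b 0 m + s b 0 (m - 1) + d * t"
        using s_affine[of m b t] s_affine[of "m - 1" b t] m2 unfolding d_def
        by (simp add: algebra_simps)
      also have "\<dots> = b m" unfolding t_def using dnz by simp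
      finally show ?thesis using 1 by simp
    next
      case 2
      then show ?thesis by (simp add: op1_eq numeral_2_eq_2)
    next
      case 3
      then show ?thesis by (simp add: op1_eq algebra_simps)
    qed
  qed
  then show ?thesis by blast
qed


lemma conv_op1:
  assumes "i \<in> {1..m}" "j \<in> {1..n}"
  shows "conv_refl box_blur m n X i j = op1 m (\<lambda>i'. op1 n (X i') j) i / 9"
  using assms unfolding conv_refl_def op1_def refl_ext_def box_blur_def three_set
  by (simp add: algebra_simps)

lemma op1_const: "op1 n (\<lambda>_. c) j = 3 * c"
  unfolding op1_def three_set by simp

lemma op1_scale: "op1 m (\<lambda>i. c * f i) i = c * op1 m f i"
  unfolding op1_def by (simp add: sum_distrib_left)

lemma op1_cc:
  assumes "m mod 3 = 0" "m \<ge> 1" "i \<in> {1..m}"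
  shows "op1 m cc i = 0"
proof -
  have m3: "m \<ge> 3" using assms by auto
  have "i = m \<or> i = 1 \<or> (1 < i \<and> i < m)" using assms by auto
  then consider "i = m" | "i = 1" | "1 < i" "i < m" by blast
  then show ?thesis
  proof cases
    case 1
    obtain p where p: "m = Suc p" using assms by (cases m) auto
    have "p mod 3 = 2" using assms p by (auto simp: mod_Suc split: if_splits)
    then show ?thesis using cc_d(3)[of p] 1 p op1_last[of m cc] m3 by simp
  next
    case 2
    then show ?thesis using m3 cc_sum3[of 0] by (simp add: op1_eq cc_def)
  next
    case 3
    then obtain q where q: "i = Suc q" "q \<ge> 1" by (cases i) auto
    then show ?thesis using 3 cc_sum3[of q] by (simp add: op1_eq algebra_simps)
  qed
qed


lemma uniq2:
  assumes "m \<ge> 1" "n \<ge> 1" "m mod 3 \<noteq> 0" "n mod 3 \<noteq> 0"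
    "X1 \<in> matrices m n" "X2 \<in> matrices m n"
    "conv_refl box_blur m n X1 = conv_refl box_blur m n X2"
  shows "X1 = X2"
proof (intro ext)
  fix i j
  show "X1 i j = X2 i j"
  proof (cases "i \<in> {1..m} \<and> j \<in> {1..n}")
    case False
    then show ?thesis using assms(5,6) unfolding matrices_def by auto
  next
    case True
    have "\<forall>j\<in>{1..n}. op1 n (X1 i) j = op1 n (X2 i) j"
    proof
      fix j assume j: "j \<in> {1..n}"
      have hh: "op1 n (X1 i') j = op1 n (X2 i') j" if i': "i' \<in> {1..m}" for i'
      proof (rule uniq1[OF assms(1,3), of "\<lambda>i'. op1 n (X1 i') j" "\<lambda>i'. op1 m (\<lambda>i'. op1 n (X1 i') j) i'"])
        show "\<forall>i\<in>{1..m}. op1 m (\<lambda>i'. op1 n (X2 i') j) i = op1 m (\<lambda>i'. op1 n (X1 i') j) i"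
        proof
          fix i assume "i \<in> {1..m}"
          then have "conv_refl box_blur m n X1 i j = conv_refl box_blur m n X2 i j"
            using assms(7) by simp
          then show "op1 m (\<lambda>i'. op1 n (X2 i') j) i = op1 m (\<lambda>i'. op1 n (X1 i') j) i"
            using conv_op1[OF \<open>i \<in> {1..m}\<close> j] by simp
        qed
      qed (use i' in auto)
      show "op1 n (X1 i) j = op1 n (X2 i) j" using hh[of i] True by simp
    qed
    then have hs: "\<forall>k\<in>{1..n}. op1 n (X2 i) k = op1 n (X1 i) k" by simp
    have jn: "j \<in> {1..n}" using True by simp
    show ?thesis by (rule uniq1[OF assms(2,4) _ hs jn]) simp
  qed
qed

definition sol :: "nat \<Rightarrow> (nat \<Rightarrow> real) \<Rightarrow> nat \<Rightarrow> real" where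
  "sol m b = (SOME x. \<forall>i\<in>{1..m}. op1 m x i = b i)"

lemma sol_spec:
  assumes "m \<ge> 1" "m mod 3 \<noteq> 0" "i \<in> {1..m}"
  shows "op1 m (sol m b) i = b i"
proof -
  have "\<forall>i\<in>{1..m}. op1 m (sol m b) i = b i"
    unfolding sol_def by (rule someI_ex[OF exist1[OF assms(1,2)]])
  then show ?thesis using assms(3) by simp
qed

lemma exist2:
  assumes "m \<ge> 1" "n \<ge> 1" "m mod 3 \<noteq> 0" "n mod 3 \<noteq> 0" "B \<in> matrices m n"
  shows "\<exists>X. X \<in> matrices m n \<and> conv_refl box_blur m n X = B"
proof -
  define Yc where "Yc = (\<lambda>i j. sol m (\<lambda>i'. 9 * B i' j) i)"
  define X0 where "X0 = (\<lambda>i j. sol n (Yc i) j)"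
  define X where "X = (\<lambda>i j. if i \<in> {1..m} \<and> j \<in> {1..n} then X0 i j else 0)"
  have "X \<in> matrices m n" unfolding X_def matrices_def by auto
  moreover have "conv_refl box_blur m n X = B"
  proof (intro ext)
    fix i j
    show "conv_refl box_blur m n X i j = B i j"
    proof (cases "i \<in> {1..m} \<and> j \<in> {1..n}")
      case False
      then show ?thesis using assms(5) unfolding matrices_def conv_refl_def by auto
    next
      case True
      have r: "op1 n (X i') j = Yc i' j" if i': "i' \<in> {1..m}" for i'
      proof -
        have "op1 n (X i') j = op1 n (X0 i') j"
          by (rule op1_cong) (use i' True in \<open>auto simp: X_def\<close>)
        also have "\<dots> = Yc i' j" unfolding X0_def using sol_spec[OF assms(2,4)] True by simp
        finally show ?thesis .
      qed
      have "op1 m (\<lambda>i'. op1 n (X i') j) i = op1 m (\<lambda>i'. Yc i' j) i"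
        by (rule op1_cong) (use r True in auto)
      also have "\<dots> = 9 * B i j" unfolding Yc_def using sol_spec[OF assms(1,3)] True by simp
      finally show ?thesis using conv_op1[of i m j n X] True by simp
    qed
  qed
  ultimately show ?thesis by blast
qed

lemma mult3_iff: "(m::nat) \<ge> 1 \<Longrightarrow> (m \<notin> {3 * l | l. l \<ge> 1}) = (m mod 3 \<noteq> 0)"
proof -
  assume "m \<ge> 1"
  then have "m mod 3 = 0 \<Longrightarrow> m = 3 * (m div 3) \<and> m div 3 \<ge> 1" by auto
  then show ?thesis by auto
qed

lemma conv_zero: "conv_refl box_blur m n (\<lambda>i j. 0) = (\<lambda>i j. 0)"
  unfolding conv_refl_def refl_ext_def by (intro ext) simp

lemma nonuniq:
  assumes "m \<ge> 1" "n \<ge> 1" "m mod 3 = 0 \<or> n mod 3 = 0"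
  shows "\<exists>K. K \<in> matrices m n \<and> K \<noteq> (\<lambda>i j. 0) \<and> conv_refl box_blur m n K = (\<lambda>i j. 0)"
proof (cases "m mod 3 = 0")
  case True
  define K where "K = (\<lambda>i j. if i \<in> {1..m} \<and> j \<in> {1..n} then cc i else 0)"
  have k1: "K \<in> matrices m n" unfolding K_def matrices_def by auto
  have "K 1 1 \<noteq> 0" using assms unfolding K_def cc_def by auto
  then have k2: "K \<noteq> (\<lambda>i j. 0)" by auto
  have k3: "conv_refl box_blur m n K = (\<lambda>i j. 0)"
  proof (intro ext)
    fix i j
    show "conv_refl box_blur m n K i j = 0"
    proof (cases "i \<in> {1..m} \<and> j \<in> {1..n}")
      case False
      then show ?thesis unfolding conv_refl_def by auto
    next
      case c: True
      have "op1 m (\<lambda>i'. op1 n (K i') j) i = op1 m (\<lambda>i'. 3 * cc i') i"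
      proof (rule op1_cong)
        show "\<forall>k\<in>{1..m}. op1 n (K k) j = 3 * cc k"
        proof
          fix k assume k: "k \<in> {1..m}"
          have "op1 n (K k) j = op1 n (\<lambda>_. cc k) j"
            by (rule op1_cong) (use k c in \<open>auto simp: K_def\<close>)
          then show "op1 n (K k) j = 3 * cc k" by (simp add: op1_const)
        qed
      qed (use c in auto)
      also have "\<dots> = 0" using op1_scale[of m 3 cc i] op1_cc[OF True assms(1)] c by simp
      finally show ?thesis using conv_op1[of i m j n K] c by simp
    qed
  qed
  show ?thesis by (rule exI[of _ K]) (simp only: k1 k2 k3 simp_thms)
next
  case False
  then have nd: "n mod 3 = 0" using assms by auto
  define K where "K = (\<lambda>i j. if i \<in> {1..m} \<and> j \<in> {1..n} then cc j else 0)"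
  have k1: "K \<in> matrices m n" unfolding K_def matrices_def by auto
  have "K 1 1 \<noteq> 0" using assms unfolding K_def cc_def by auto
  then have k2: "K \<noteq> (\<lambda>i j. 0)" by auto
  have k3: "conv_refl box_blur m n K = (\<lambda>i j. 0)"
  proof (intro ext)
    fix i j
    show "conv_refl box_blur m n K i j = 0"
    proof (cases "i \<in> {1..m} \<and> j \<in> {1..n}")
      case False
      then show ?thesis unfolding conv_refl_def by auto
    next
      case c: True
      have "op1 m (\<lambda>i'. op1 n (K i') j) i = op1 m (\<lambda>i'. 0) i"
      proof (rule op1_cong)
        show "\<forall>k\<in>{1..m}. op1 n (K k) j = 0"
        proof
          fix k assume k: "k \<in> {1..m}"
          have "op1 n (K k) j = op1 n cc j"
            by (rule op1_cong) (use k c in \<open>auto simp: K_def\<close>)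
          then show "op1 n (K k) j = 0" using op1_cc[OF nd assms(2)] c by simp
        qed
      qed (use c in auto)
      also have "\<dots> = 0" using op1_const[of m 0 i] by simp
      finally show ?thesis using conv_op1[of i m j n K] c by simp
    qed
  qed
  show ?thesis by (rule exI[of _ K]) (simp only: k1 k2 k3 simp_thms)
qed

theorem corollary3:
  fixes m n :: nat
  assumes "m \<ge> 1" and "n \<ge> 1"
  shows "(\<forall>B \<in> matrices m n. \<exists>!X. X \<in> matrices m n \<and> conv_refl box_blur m n X = B)
         \<longleftrightarrow> (m \<notin> {3 * l | l. l \<ge> 1} \<and> n \<notin> {3 * l | l. l \<ge> 1})"
proof -
  have "(\<forall>B \<in> matrices m n. \<exists>!X. X \<in> matrices m n \<and> conv_refl box_blur m n X = B)
         \<longleftrightarrow> (m mod 3 \<noteq> 0 \<and> n mod 3 \<noteq> 0)"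
  proof
    assume h: "\<forall>B \<in> matrices m n. \<exists>!X. X \<in> matrices m n \<and> conv_refl box_blur m n X = B"
    show "m mod 3 \<noteq> 0 \<and> n mod 3 \<noteq> 0"
    proof (rule ccontr)
      assume "\<not> (m mod 3 \<noteq> 0 \<and> n mod 3 \<noteq> 0)"
      then have "m mod 3 = 0 \<or> n mod 3 = 0" by auto
      from nonuniq[OF assms this] obtain K where K: "K \<in> matrices m n" "K \<noteq> (\<lambda>i j. 0)"
        "conv_refl box_blur m n K = (\<lambda>i j. 0)"
        by (elim exE conjE)
      have z: "(\<lambda>i j. 0::real) \<in> matrices m n" unfolding matrices_def by auto
      have ex: "\<exists>!X. X \<in> matrices m n \<and> conv_refl box_blur m n X = (\<lambda>i j. 0)"
        using h z by simp
      have e1: "(THE X. X \<in> matrices m n \<and> conv_refl box_blur m n X = (\<lambda>i j. 0)) = K"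
        by (rule the1_equality[OF ex]) (use K in simp)
      have e2: "(THE X. X \<in> matrices m n \<and> conv_refl box_blur m n X = (\<lambda>i j. 0)) = (\<lambda>i j. 0)"
        by (rule the1_equality[OF ex]) (use z conv_zero[of m n] in simp)
      show False using e1 e2 K(2) by simp
    qed
  next
    assume h: "m mod 3 \<noteq> 0 \<and> n mod 3 \<noteq> 0"
    show "\<forall>B \<in> matrices m n. \<exists>!X. X \<in> matrices m n \<and> conv_refl box_blur m n X = B"
    proof
      fix B assume B: "B \<in> matrices m n"
      obtain X where X: "X \<in> matrices m n" "conv_refl box_blur m n X = B"
        using exist2[OF assms h[THEN conjunct1] h[THEN conjunct2] B] by blast
      show "\<exists>!X. X \<in> matrices m n \<and> conv_refl box_blur m n X = B"
      proof (rule ex1I[of _ X])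
        show "X \<in> matrices m n \<and> conv_refl box_blur m n X = B" using X by simp
      next
        fix Y assume "Y \<in> matrices m n \<and> conv_refl box_blur m n Y = B"
        then show "Y = X" using uniq2[OF assms h[THEN conjunct1] h[THEN conjunct2], of Y X] X by simp
      qed
    qed
  qed
  then show ?thesis using mult3_iff[OF assms(1)] mult3_iff[OF assms(2)] by simp
qed

end
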